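(* Let $r_0$ solve $r_0'=r_0\mathcal N(r_0^2)$, $r_0(0)=\frac12$, and set $\mathcal N_0=\mathcal N(r_0^2)$ and $\mathcal N_p=\mathcal N'(r_0^2)r_0^2$. Define the real potential $$\mathcal V(x)=\big[\mathcal N_0(x)+\mathcal N_p(x)\big]_x+\big[\mathcal N_0(x)+\mathcal N_p(x)\big]^2.$$ Assume $\lambda\in\mathbb C$ and $0\ne B=(U,V)\in L^2(\mathbb R;\mathbb C^2)$ satisfy $$U_x=(\mathcal N_0+\mathcal N_p)U+\lambda V,\qquad V_x=\lambda U-(\mathcal N_0+\mathcal N_p)V.$$ Then: (i) $-\lambda^2\in\mathbb R$, and $(\mathcal E,U)=(-\lambda^2,U)$, with $0\ne U\in L^2$, is an eigenpair of $-\partial_x^2+\mathcal V(x)$, i.e. $(-\partial_x^2+\mathcal V)U=\mathcal EU$. (ii) $\mathcal E=0$ is the ground state energy (lowest eigenvalue) of $-\partial_x^2+\mathcal V(x)$.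
   Context: Nonlinearity: $\mathcal N:[0,\infty)\to\mathbb R$ is smooth, $\mathcal N'(s)<0$ for $s>0$, $\mathcal N(0)=1$, $\mathcal N(1)=0$, $\lim_{s\to\infty}\mathcal N(s)\in[-\infty,0)$, and $K:=-\mathcal N'(1)>0$. The function $r_0$ increases from $0$ at $-\infty$ to $1$ at $+\infty$. *)

theory Defs
  imports "HOL-Analysis.Analysis"
begin

definition smooth_on_real :: "real set \<Rightarrow> (real \<Rightarrow> real) \<Rightarrow> bool" where
  "smooth_on_real S f \<longleftrightarrow>
     (\<exists>D :: nat \<Rightarrow> real \<Rightarrow> real. D 0 = f \<and>
        (\<forall>k. \<forall>x\<in>S. (D k has_real_derivative D (Suc k) x) (at x within S)))"

definition L2_fun :: "(real \<Rightarrow> complex) \<Rightarrow> bool" where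
  "L2_fun u \<longleftrightarrow> u \<in> borel_measurable lborel \<and> integrable lborel (\<lambda>x. (cmod (u x))\<^sup>2)"

definition schrod_eigenpair :: "(real \<Rightarrow> real) \<Rightarrow> complex \<Rightarrow> (real \<Rightarrow> complex) \<Rightarrow> bool" where
  "schrod_eigenpair V E u \<longleftrightarrow>
     L2_fun u \<and> (\<exists>x. u x \<noteq> 0) \<and>
     (\<exists>u' u''. \<forall>x. (u has_vector_derivative u' x) (at x) \<and>
                    (u' has_vector_derivative u'' x) (at x) \<and>
                    - u'' x + complex_of_real (V x) * u x = E * u x)"

definition schrod_eigenvalue :: "(real \<Rightarrow> real) \<Rightarrow> complex \<Rightarrow> bool" where
  "schrod_eigenvalue V E \<longleftrightarrow> (\<exists>u. schrod_eigenpair V E u)"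

end

theory Submission
  imports Defs
begin


lemma nonint_tail:
  fixes g :: "real \<Rightarrow> real"
  assumes gi: "g integrable_on UNIV" and g0: "\<And>x. g x \<ge> 0" and d: "\<delta> > 0"
    and tl: "\<And>x. x \<ge> b \<Longrightarrow> g x \<ge> \<delta>"
  shows False
proof -
  define I where "I = integral UNIV g"
  obtain n::nat where n: "I < real n * \<delta>" using reals_Archimedean3[OF d] by blast
  have int: "g integrable_on {b..b+real n}" by (rule integrable_on_subinterval[OF gi]) auto
  have "integral {b..b+real n} (\<lambda>x. \<delta>) \<le> integral {b..b+real n} g"
    by (rule integral_le) (auto simp: int tl)
  also have "\<dots> \<le> I" unfolding I_def
    by (rule integral_subset_le) (auto simp: int gi g0)
  finally show False using n by simp
qed




lemma right_tail:
  fixes W W' :: "real \<Rightarrow> real" and u u' u'' :: "real \<Rightarrow> complex" and E :: complex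
  assumes Wd: "\<And>x. (W has_real_derivative W' x) (at x)"
    and Wb: "\<And>x. \<bar>W x\<bar> \<le> M"
    and ud: "\<And>x. (u has_vector_derivative u' x) (at x)"
    and ud2: "\<And>x. (u' has_vector_derivative u'' x) (at x)"
    and eq: "\<And>x. u'' x = (of_real (W' x + (W x)\<^sup>2) - E) * u x"
    and gi: "integrable lborel (\<lambda>x. (cmod (u x))\<^sup>2)"
    and c: "c > 0"
    and tl: "\<And>x. x \<ge> b \<Longrightarrow> cmod (cnj (u x) * (of_real (W x) * u x - u' x)) \<ge> c"
  shows False
proof -
  define w where "w x = of_real (W x) * u x - u' x" for x
  define h where "h x = cnj (u x) * w x" for x
  define g where "g x = (cmod (u x))\<^sup>2" for x
  define \<rho> where "\<rho> x = Re (h x)" for x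
  define gd where "gd x = 2 * Re (cnj (u x) * u' x)" for x
  have g0: "g x \<ge> 0" for x by (simp add: g_def)
  have gi': "g integrable_on UNIV" using integrable_on_lborel[OF gi] unfolding g_def .
  have gc: "g = (\<lambda>x. Re (cnj (u x) * u x))"
    by (auto simp: g_def fun_eq_iff cmod_power2 complex_mult_cnj mult.commute)
  have ofg: "complex_of_real (g x) = u x * cnj (u x)" for x
    unfolding g_def by (rule complex_norm_square)
  have hd: "(h has_vector_derivative E * of_real (g x) - of_real ((cmod (w x))\<^sup>2)) (at x)" for x
  proof -
    have wd: "(w has_vector_derivative (of_real (W x) * u' x + of_real (W' x) * u x - u'' x)) (at x)"
      unfolding w_def[abs_def]
      by (intro has_vector_derivative_diff has_vector_derivative_mult has_vector_derivative_of_real Wd ud ud2)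
    have "(h has_vector_derivative cnj (u x) * (of_real (W x) * u' x + of_real (W' x) * u x - u'' x) + cnj (u' x) * w x) (at x)"
      unfolding h_def[abs_def]
      by (intro has_vector_derivative_mult has_vector_derivative_cnj wd ud)
    moreover have "cnj (u x) * (of_real (W x) * u' x + of_real (W' x) * u x - u'' x) + cnj (u' x) * w x
       = E * of_real (g x) - of_real ((cmod (w x))\<^sup>2)"
      unfolding ofg complex_norm_square eq w_def
      by (simp add: algebra_simps power2_eq_square)
    ultimately show ?thesis by simp
  qed
  have \<rho>d: "(\<rho> has_real_derivative (Re E * g x - (cmod (w x))\<^sup>2)) (at x)" for x
    unfolding \<rho>_def[abs_def] using has_field_derivative_Re[OF hd[of x]] by simp
  have \<rho>eq: "\<rho> x = W x * g x - gd x / 2" for x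
    unfolding \<rho>_def h_def w_def gd_def gc by (simp add: algebra_simps)
  have gdd: "(g has_real_derivative gd x) (at x)" for x
  proof -
    have "((\<lambda>x. Re (cnj (u x) * u x)) has_real_derivative Re (cnj (u x) * u' x + cnj (u' x) * u x)) (at x)"
      by (intro has_field_derivative_Re has_vector_derivative_mult has_vector_derivative_cnj ud)
    moreover have "Re (cnj (u x) * u' x + cnj (u' x) * u x) = gd x"
      unfolding gd_def by simp
    ultimately show ?thesis unfolding gc by simp
  qed
  have hn: "cmod (h x) = cmod (u x) * cmod (w x)" for x
    unfolding h_def by (simp add: norm_mult)
  have gcont: "continuous (at x) g" for x
    using DERIV_isCont[OF gdd[of x]] .
  define I where "I = integral UNIV g"
  have I0: "I \<ge> 0" unfolding I_def by (rule integral_nonneg[OF gi']) (simp add: g0)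
  define G where "G x = integral {b-1..x} g" for x
  have Gd: "(G has_real_derivative g x) (at x)" if "x > b - 1" for x
  proof -
    have "continuous_on {b-1..x+1} g" by (intro continuous_at_imp_continuous_on ballI gcont)
    from integral_has_real_derivative[OF this, of x] that
    have "(G has_real_derivative g x) (at x within {b-1..x+1})" unfolding G_def by simp
    moreover have "at x within {b-1..x+1} = at x"
      by (rule at_within_interior) (use that in simp)
    ultimately show ?thesis by simp
  qed
  define K where "K = \<bar>Re E\<bar> + c\<^sup>2"
  define \<Psi> where "\<Psi> x = \<rho> x - K * G x + 2 * c\<^sup>2 * x" for x
  have \<Psi>d: "(\<Psi> has_real_derivative (Re E * g x - (cmod (w x))\<^sup>2 - K * g x + 2 * c\<^sup>2)) (at x)"
    if "x > b - 1" for x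
    unfolding \<Psi>_def[abs_def]
    by (auto intro!: derivative_eq_intros \<rho>d Gd that)
  have \<Psi>neg: "Re E * g x - (cmod (w x))\<^sup>2 - K * g x + 2 * c\<^sup>2 \<le> 0" if "x \<ge> b" for x
  proof -
    have hc: "cmod (u x) * cmod (w x) \<ge> c" using tl[OF that] hn[of x] unfolding h_def w_def by simp
    have "0 \<le> (cmod (w x) - c * cmod (u x))\<^sup>2" by simp
    hence "2 * c * (cmod (u x) * cmod (w x)) \<le> (cmod (w x))\<^sup>2 + c\<^sup>2 * g x"
      by (simp add: g_def power2_eq_square algebra_simps)
    moreover have "2 * c * c \<le> 2 * c * (cmod (u x) * cmod (w x))"
      using hc c by (intro mult_left_mono) auto
    moreover have "Re E * g x \<le> \<bar>Re E\<bar> * g x" by (intro mult_right_mono g0) simp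
    ultimately show ?thesis unfolding K_def by (simp add: power2_eq_square algebra_simps)
  qed
  have \<rho>bound: "\<rho> x \<le> \<rho> b + K * I - 2 * c\<^sup>2 * (x - b)" if "x \<ge> b" for x
  proof -
    have "\<Psi> x \<le> \<Psi> b"
      using DERIV_nonpos_imp_nonincreasing[of b x \<Psi>] that \<Psi>d \<Psi>neg by force
    moreover have "G x - G b = integral {b..x} g"
    proof -
      have "g integrable_on {b-1..x}" by (rule integrable_on_subinterval[OF gi']) auto
      from Henstock_Kurzweil_Integration.integral_combine[OF _ _ this, of b] that show ?thesis unfolding G_def by simp
    qed
    moreover have "integral {b..x} g \<le> I" unfolding I_def
      by (rule integral_subset_le) (auto simp: g0 gi' integrable_on_subinterval[OF gi'])
    moreover have "K \<ge> 0" unfolding K_def by simp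
    ultimately have "\<rho> x - \<rho> b \<le> K * (G x - G b) - 2 * c\<^sup>2 * (x - b)" and "K * (G x - G b) \<le> K * I"
      unfolding \<Psi>_def by (simp_all add: algebra_simps mult_left_mono[of _ I K, simplified mult.commute])
    thus ?thesis by simp
  qed
  define b1 where "b1 = b + (\<bar>\<rho> b\<bar> + K * I + 1) / (2 * c\<^sup>2)"
  have c2: "2 * c\<^sup>2 > 0" using c by simp
  have \<rho>m1: "\<rho> x \<le> -1" if "x \<ge> b1" for x
  proof -
    have "K \<ge> 0" unfolding K_def by simp
    hence nn: "\<bar>\<rho> b\<bar> + K * I + 1 \<ge> 0" using I0 by simp
    hence xb: "x \<ge> b" using that c2 unfolding b1_def by (smt (verit) divide_nonneg_pos)
    have "\<bar>\<rho> b\<bar> + K * I + 1 = 2 * c\<^sup>2 * ((\<bar>\<rho> b\<bar> + K * I + 1) / (2 * c\<^sup>2))"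
      using c2 by simp
    also have "\<dots> \<le> 2 * c\<^sup>2 * (x - b)"
      using that c2 unfolding b1_def by (intro mult_left_mono) auto
    finally show ?thesis using \<rho>bound[OF xb] by simp
  qed
  define M1 where "M1 = max M 1"
  have M1: "M1 \<ge> 1" "\<And>x. \<bar>W x\<bar> \<le> M1" unfolding M1_def using Wb by (auto intro: le_max_iff_disj[THEN iffD2])
  have gdlow: "gd x + 2 * M1 * g x - 2 \<ge> 0" if "x \<ge> b1" for x
  proof -
    have "- M1 * g x \<le> W x * g x" using M1(2)[of x] g0[of x] by (intro mult_right_mono) auto
    thus ?thesis using \<rho>m1[OF that] \<rho>eq[of x] by simp
  qed
  define k where "k x = exp (2 * M1 * x) * g x - exp (2 * M1 * x) / M1" for x
  have kd: "(k has_real_derivative exp (2 * M1 * x) * (gd x + 2 * M1 * g x - 2)) (at x)" for x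
  proof -
    have "(k has_real_derivative exp (2 * M1 * x) * (2 * M1 * 1) * g x + exp (2 * M1 * x) * gd x - exp (2 * M1 * x) * (2 * M1 * 1) / M1) (at x)"
      unfolding k_def[abs_def] by (auto intro!: derivative_eq_intros gdd)
    moreover have "exp (2 * M1 * x) * (2 * M1 * 1) * g x + exp (2 * M1 * x) * gd x - exp (2 * M1 * x) * (2 * M1 * 1) / M1
      = exp (2 * M1 * x) * (gd x + 2 * M1 * g x - 2)" using M1 by (simp add: field_simps)
    ultimately show ?thesis by simp
  qed
  have glow: "g x \<ge> 1 / (2 * M1)" if "x \<ge> b1 + 1 / M1" for x
  proof -
    have xb: "x \<ge> b1" using that M1 by (smt (verit) divide_pos_pos)
    have "k b1 \<le> k x"
      using DERIV_nonneg_imp_nondecreasing[of b1 x k] xb kd gdlow by force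
    hence A: "exp (2 * M1 * x) * g x \<ge> exp (2 * M1 * x) / M1 - exp (2 * M1 * b1) / M1"
      unfolding k_def using g0[of b1] by (smt (verit) mult_nonneg_nonneg exp_ge_zero)
    have "2 * M1 * x \<ge> 2 * M1 * (b1 + 1 / M1)" using that M1 by (intro mult_left_mono) auto
    hence "2 * M1 * x \<ge> 2 * M1 * b1 + 2" using M1 by (simp add: algebra_simps)
    hence E1: "exp (2 * M1 * b1 + 2) \<le> exp (2 * M1 * x)" by simp
    have E2: "exp (2 * M1 * b1) * 2 \<le> exp (2 * M1 * b1 + 2)"
    proof -
      have "(2::real) \<le> exp 2" using exp_ge_add_one_self[of 2] by simp
      thus ?thesis by (simp add: exp_add)
    qed
    have "exp (2 * M1 * b1) \<le> exp (2 * M1 * x) / 2" using order_trans[OF E2 E1] by simp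
    hence "exp (2 * M1 * x) * (1 / (2 * M1)) \<le> (exp (2 * M1 * x) - exp (2 * M1 * b1)) / M1"
    proof -
      assume a: "exp (2 * M1 * b1) \<le> exp (2 * M1 * x) / 2"
      have "exp (2 * M1 * x) * (1 / (2 * M1)) = (exp (2 * M1 * x) / 2) / M1" by simp
      also have "\<dots> \<le> (exp (2 * M1 * x) - exp (2 * M1 * b1)) / M1"
        using a M1 by (intro divide_right_mono) auto
      finally show ?thesis .
    qed
    also have "\<dots> = exp (2 * M1 * x) / M1 - exp (2 * M1 * b1) / M1" by (simp add: diff_divide_distrib)
    also have "\<dots> \<le> exp (2 * M1 * x) * g x" using A .
    finally have "exp (2 * M1 * x) * g x \<ge> exp (2 * M1 * x) * (1 / (2 * M1))" .
    thus ?thesis using mult_le_cancel_left_pos[of "exp (2 * M1 * x)" "1 / (2 * M1)" "g x"] by simp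
  qed
  show False
    by (rule nonint_tail[OF gi' g0 _ glow]) (use M1 in simp)
qed




lemma refl_vd:
  fixes u :: "real \<Rightarrow> complex"
  assumes "\<And>x. (u has_vector_derivative u' x) (at x)"
  shows "((\<lambda>x. u (- x)) has_vector_derivative - u' (- x)) (at x)"
proof -
  have "((u \<circ> uminus) has_vector_derivative (-1) *\<^sub>R u' (- x)) (at x)"
    by (rule vector_diff_chain_at) (auto intro!: derivative_eq_intros assms simp: has_real_derivative_iff_has_vector_derivative[symmetric])
  thus ?thesis by (simp add: o_def)
qed

lemma left_tail:
  fixes W W' :: "real \<Rightarrow> real" and u u' u'' :: "real \<Rightarrow> complex" and E :: complex
  assumes Wd: "\<And>x. (W has_real_derivative W' x) (at x)"
    and Wb: "\<And>x. \<bar>W x\<bar> \<le> M"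
    and ud: "\<And>x. (u has_vector_derivative u' x) (at x)"
    and ud2: "\<And>x. (u' has_vector_derivative u'' x) (at x)"
    and eq: "\<And>x. u'' x = (of_real (W' x + (W x)\<^sup>2) - E) * u x"
    and gi: "integrable lborel (\<lambda>x. (cmod (u x))\<^sup>2)"
    and c: "c > 0"
    and tl: "\<And>x. x \<le> a \<Longrightarrow> cmod (cnj (u x) * (of_real (W x) * u x - u' x)) \<ge> c"
  shows False
proof (rule right_tail[of "\<lambda>x. - W (- x)" "\<lambda>x. W' (- x)" M "\<lambda>x. u (- x)" "\<lambda>x. - u' (- x)" "\<lambda>x. u'' (- x)" E c "- a"])
  show "((\<lambda>x. - W (- x)) has_real_derivative W' (- x)) (at x)" for x
  proof -
    have "((\<lambda>x. W (- x)) has_real_derivative W' (- x) * (- 1)) (at x)"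
      by (rule DERIV_chain2[where g=uminus, OF Wd]) (auto intro!: derivative_eq_intros)
    from DERIV_minus[OF this] show ?thesis by simp
  qed
  show "\<bar>- W (- x)\<bar> \<le> M" for x using Wb[of "-x"] by simp
  show "((\<lambda>x. u (- x)) has_vector_derivative - u' (- x)) (at x)" for x by (rule refl_vd[OF ud])
  show "((\<lambda>x. - u' (- x)) has_vector_derivative u'' (- x)) (at x)" for x
    using has_vector_derivative_minus[OF refl_vd[OF ud2, of x]] by simp
  show "u'' (- x) = (of_real (W' (- x) + (- W (- x))\<^sup>2) - E) * u (- x)" for x using eq[of "-x"] by simp
  show "integrable lborel (\<lambda>x. (cmod (u (- x)))\<^sup>2)"
    using lborel_integrable_real_affine_iff[of "-1" "\<lambda>x. (cmod (u x))\<^sup>2" 0] gi by simp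
  show "c > 0" by fact
  show "c \<le> cmod (cnj (u (- x)) * (complex_of_real (- W (- x)) * u (- x) - - u' (- x)))" if "- a \<le> x" for x
  proof -
    have "cmod (cnj (u (- x)) * (complex_of_real (- W (- x)) * u (- x) - - u' (- x)))
       = cmod (cnj (u (- x)) * (complex_of_real (W (- x)) * u (- x) - u' (- x)))"
      by (simp add: norm_mult norm_minus_commute)
    thus ?thesis using tl[of "-x"] that by simp
  qed
qed




lemma h_deriv:
  fixes W W' :: "real \<Rightarrow> real" and u u' u'' :: "real \<Rightarrow> complex" and E :: complex
  assumes Wd: "\<And>x. (W has_real_derivative W' x) (at x)"
    and ud: "\<And>x. (u has_vector_derivative u' x) (at x)"
    and ud2: "\<And>x. (u' has_vector_derivative u'' x) (at x)"
    and eq: "\<And>x. u'' x = (of_real (W' x + (W x)\<^sup>2) - E) * u x"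
  shows "((\<lambda>x. cnj (u x) * (of_real (W x) * u x - u' x)) has_vector_derivative
           E * of_real ((cmod (u x))\<^sup>2) - of_real ((cmod (of_real (W x) * u x - u' x))\<^sup>2)) (at x)"
proof -
  define w where "w x = of_real (W x) * u x - u' x" for x
  have wd: "(w has_vector_derivative (of_real (W x) * u' x + of_real (W' x) * u x - u'' x)) (at x)"
    unfolding w_def[abs_def]
    by (intro has_vector_derivative_diff has_vector_derivative_mult has_vector_derivative_of_real Wd ud ud2)
  have "((\<lambda>x. cnj (u x) * w x) has_vector_derivative cnj (u x) * (of_real (W x) * u' x + of_real (W' x) * u x - u'' x) + cnj (u' x) * w x) (at x)"
    by (intro has_vector_derivative_mult has_vector_derivative_cnj wd ud)
  moreover have "cnj (u x) * (of_real (W x) * u' x + of_real (W' x) * u x - u'' x) + cnj (u' x) * w x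
     = E * of_real ((cmod (u x))\<^sup>2) - of_real ((cmod (w x))\<^sup>2)"
    unfolding complex_norm_square eq w_def
    by (simp add: algebra_simps power2_eq_square)
  ultimately show ?thesis unfolding w_def by simp
qed

lemma both_tails:
  fixes W W' :: "real \<Rightarrow> real" and u u' u'' :: "real \<Rightarrow> complex" and E :: complex
  assumes Wd: "\<And>x. (W has_real_derivative W' x) (at x)"
    and Wb: "\<And>x. \<bar>W x\<bar> \<le> M"
    and ud: "\<And>x. (u has_vector_derivative u' x) (at x)"
    and ud2: "\<And>x. (u' has_vector_derivative u'' x) (at x)"
    and eq: "\<And>x. u'' x = (of_real (W' x + (W x)\<^sup>2) - E) * u x"
    and gi: "integrable lborel (\<lambda>x. (cmod (u x))\<^sup>2)"
    and \<tau>d: "\<And>x. (\<tau> has_real_derivative \<tau>' x) (at x)"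
    and \<tau>pos: "\<And>x. \<tau>' x \<ge> 0" and \<tau>x0: "\<tau>' x0 > 0"
    and \<tau>h: "\<And>x. \<bar>\<tau> x\<bar> \<le> cmod (cnj (u x) * (of_real (W x) * u x - u' x))"
  shows False
proof -
  obtain d where d: "d > 0" "\<And>h. h > 0 \<Longrightarrow> h < d \<Longrightarrow> \<tau> x0 < \<tau> (x0 + h)"
    using DERIV_pos_inc_right[OF \<tau>d \<tau>x0] by blast
  define x1 where "x1 = x0 + d / 2"
  have lt: "\<tau> x0 < \<tau> x1" unfolding x1_def using d by simp
  have mono: "\<tau> x \<le> \<tau> y" if "x \<le> y" for x y
    using DERIV_nonneg_imp_nondecreasing[of x y \<tau>] that \<tau>d \<tau>pos by blast
  have x01: "x0 \<le> x1" unfolding x1_def using d by simp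
  show False
  proof (cases "\<tau> x1 > 0")
    case True
    show False
    proof (rule right_tail[OF Wd Wb ud ud2 eq gi True])
      fix x assume "x1 \<le> x"
      with mono[OF this] \<tau>h[of x] True show "\<tau> x1 \<le> cmod (cnj (u x) * (of_real (W x) * u x - u' x))" by simp
    qed
  next
    case False
    hence neg: "\<tau> x0 < 0" using lt by simp
    show False
    proof (rule left_tail[OF Wd Wb ud ud2 eq gi, of "- \<tau> x0" x0])
      show "- \<tau> x0 > 0" using neg by simp
      fix x assume "x \<le> x0"
      with mono[OF this] \<tau>h[of x] neg show "- \<tau> x0 \<le> cmod (cnj (u x) * (of_real (W x) * u x - u' x))" by simp
    qed
  qed
qed

lemma spectral:
  fixes W W' :: "real \<Rightarrow> real" and u u' u'' :: "real \<Rightarrow> complex" and E :: complex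
  assumes Wd: "\<And>x. (W has_real_derivative W' x) (at x)"
    and Wb: "\<And>x. \<bar>W x\<bar> \<le> M"
    and ud: "\<And>x. (u has_vector_derivative u' x) (at x)"
    and ud2: "\<And>x. (u' has_vector_derivative u'' x) (at x)"
    and eq: "\<And>x. u'' x = (of_real (W' x + (W x)\<^sup>2) - E) * u x"
    and gi: "integrable lborel (\<lambda>x. (cmod (u x))\<^sup>2)"
    and nz: "u x0 \<noteq> 0"
  shows "Im E = 0 \<and> 0 \<le> Re E"
proof -
  define h where "h x = cnj (u x) * (of_real (W x) * u x - u' x)" for x
  define g where "g x = (cmod (u x))\<^sup>2" for x
  define q where "q x = (cmod (of_real (W x) * u x - u' x))\<^sup>2" for x
  have hd: "(h has_vector_derivative E * of_real (g x) - of_real (q x)) (at x)" for x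
    unfolding h_def[abs_def] g_def q_def by (rule h_deriv[OF Wd ud ud2 eq])
  have g0: "g x \<ge> 0" "q x \<ge> 0" for x by (simp_all add: g_def q_def)
  have gx0: "g x0 > 0" using nz by (simp add: g_def)
  have ImE: "Im E = 0"
  proof (rule ccontr)
    assume ne: "Im E \<noteq> 0"
    define s where "s = sgn (Im E)"
    have d0: "((\<lambda>x. s * Im (h x)) has_real_derivative s * Im (E * of_real (g x) - of_real (q x))) (at x)" for x
      by (intro DERIV_cmult has_field_derivative_Im hd)
    have sI: "s * Im E = \<bar>Im E\<bar>" unfolding s_def by (simp add: sgn_real_def)
    have eqs: "s * Im (E * of_real (g x) - of_real (q x)) = \<bar>Im E\<bar> * g x" for x
      by (simp add: sI mult.assoc[symmetric])
    have d: "((\<lambda>x. s * Im (h x)) has_real_derivative \<bar>Im E\<bar> * g x) (at x)" for x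
      using d0[of x] unfolding eqs[of x] .
    show False
    proof (rule both_tails[OF Wd Wb ud ud2 eq gi d])
      show "0 \<le> \<bar>Im E\<bar> * g x" for x using g0 by simp
      show "0 < \<bar>Im E\<bar> * g x0" using gx0 ne by simp
      show "\<bar>s * Im (h x)\<bar> \<le> cmod (cnj (u x) * (of_real (W x) * u x - u' x))" for x
        unfolding s_def h_def[symmetric] using ne abs_Im_le_cmod[of "h x"] by (simp add: abs_mult)
    qed
  qed
  have ReE: "0 \<le> Re E"
  proof (rule ccontr)
    assume ne: "\<not> 0 \<le> Re E"
    have "((\<lambda>x. - Re (h x)) has_real_derivative - Re (E * of_real (g x) - of_real (q x))) (at x)" for x
      by (intro DERIV_minus has_field_derivative_Re hd)
    hence d: "((\<lambda>x. - Re (h x)) has_real_derivative q x - Re E * g x) (at x)" for x by simp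
    show False
    proof (rule both_tails[OF Wd Wb ud ud2 eq gi d])
      show "0 \<le> q x - Re E * g x" for x 
        using g0[of x] ne by (smt (verit) mult_nonpos_nonneg)
      show "0 < q x0 - Re E * g x0" using gx0 ne g0[of x0] by (smt (verit) mult_neg_pos)
      show "\<bar>- Re (h x)\<bar> \<le> cmod (cnj (u x) * (of_real (W x) * u x - u' x))" for x
        unfolding h_def[symmetric] using abs_Re_le_cmod[of "h x"] by simp
    qed
  qed
  show ?thesis using ImE ReE by simp
qed




lemma pos_linear:
  fixes y a :: "real \<Rightarrow> real"
  assumes yd: "\<And>x. (y has_real_derivative a x * y x) (at x)"
    and ac: "continuous_on UNIV a" and y0: "y 0 > 0"
  shows "y x > 0"
proof -
  define R where "R = \<bar>x\<bar> + 1"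
  have ac': "continuous_on {-R..R} a" using ac by (rule continuous_on_subset) simp
  obtain P where P: "\<And>t. t \<in> {-R..R} \<Longrightarrow> (P has_vector_derivative a t) (at t within {-R..R})"
    using antiderivative_continuous[OF ac'] by blast
  define z where "z t = y t * exp (- P t)" for t
  have zd: "(z has_derivative (\<lambda>h. 0)) (at t within {-R..R})" if "t \<in> {-R..R}" for t
  proof -
    have P': "(P has_real_derivative a t) (at t within {-R..R})"
      using P[OF that] by (simp add: has_real_derivative_iff_has_vector_derivative)
    have "(z has_real_derivative (a t * y t) * exp (- P t) + y t * (exp (- P t) * (- a t))) (at t within {-R..R})"
      unfolding z_def[abs_def]
      by (auto intro!: derivative_eq_intros P' has_field_derivative_at_within[OF yd])
    hence "(z has_real_derivative 0) (at t within {-R..R})" by (simp add: algebra_simps)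
    hence "(z has_derivative (*) 0) (at t within {-R..R})" by (simp add: has_field_derivative_def)
    moreover have "((*) (0::real)) = (\<lambda>h. 0)" by auto
    ultimately show ?thesis by simp
  qed
  obtain C where C: "\<And>t. t \<in> {-R..R} \<Longrightarrow> z t = C"
    using has_derivative_zero_constant[of "{-R..R}" z] zd by auto
  have "x \<in> {-R..R}" "0 \<in> {-R..R}" unfolding R_def by auto
  hence "z x = z 0" using C by metis
  hence "y x * exp (- P x) > 0" using y0 unfolding z_def by simp
  thus ?thesis by (simp add: zero_less_mult_iff)
qed

lemma mono_lim_top:
  fixes f :: "real \<Rightarrow> real"
  assumes "mono f" "\<And>x. \<bar>f x\<bar> \<le> B"
  shows "\<exists>L. (f \<longlongrightarrow> L) at_top"
proof -
  have "bdd_above (range (\<lambda>n. f (real n)))" using assms(2) by (auto intro!: bdd_aboveI[of _ B] simp: abs_le_iff)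
  moreover have "incseq (\<lambda>n. f (real n))" using assms(1) by (auto simp: incseq_def mono_def)
  ultimately have "(\<lambda>n. f (real n)) \<longlonglongrightarrow> Sup (range (\<lambda>n. f (real n)))" by (rule LIMSEQ_incseq_SUP)
  thus ?thesis using tendsto_at_topI_sequentially_real[OF assms(1)] by blast
qed

lemma mono_lim_bot:
  fixes f :: "real \<Rightarrow> real"
  assumes "mono f" "\<And>x. \<bar>f x\<bar> \<le> B"
  shows "\<exists>L. (f \<longlongrightarrow> L) at_bot"
proof -
  have "mono (\<lambda>x. - f (- x))" using assms(1) by (auto simp: mono_def)
  then obtain L where L: "((\<lambda>x. - f (- x)) \<longlongrightarrow> L) at_top" using mono_lim_top[of "\<lambda>x. - f (- x)" B] assms(2) by auto
  have "((\<lambda>x. f (- x)) \<longlongrightarrow> - L) at_top" using tendsto_minus[OF L] by simp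
  thus ?thesis by (auto simp: filterlim_at_bot_mirror)
qed




theorem lemma8p5:
  fixes N N' r0 :: "real \<Rightarrow> real"
    and lam :: complex
    and U Vc :: "real \<Rightarrow> complex"
    and U' Vc' :: "real \<Rightarrow> complex"
  assumes N_smooth: "smooth_on_real {0..} N"
    and N'_deriv: "\<And>s. s \<ge> 0 \<Longrightarrow> (N has_real_derivative N' s) (at s within {0..})"
    and N'_neg: "\<And>s. s > 0 \<Longrightarrow> N' s < 0"
    and N0: "N 0 = 1"
    and N1: "N 1 = 0"
    and N_lim: "\<exists>L::ereal. L < 0 \<and> ((\<lambda>s. ereal (N s)) \<longlongrightarrow> L) at_top"
    and K_pos: "- N' 1 > 0"
    and r0_ode: "\<And>x. (r0 has_real_derivative r0 x * N ((r0 x)\<^sup>2)) (at x)"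
    and r0_init: "r0 0 = 1/2"
    and L2_U: "L2_fun U"
    and L2_V: "L2_fun Vc"
    and B_nonzero: "\<exists>x. U x \<noteq> 0 \<or> Vc x \<noteq> 0"
    and U_ode: "\<And>x. (U has_vector_derivative U' x) (at x)"
    and V_ode: "\<And>x. (Vc has_vector_derivative Vc' x) (at x)"
    and U_eq: "\<And>x. U' x = complex_of_real (N ((r0 x)\<^sup>2) + N' ((r0 x)\<^sup>2) * (r0 x)\<^sup>2) * U x
                        + lam * Vc x"
    and V_eq: "\<And>x. Vc' x = lam * U x
                        - complex_of_real (N ((r0 x)\<^sup>2) + N' ((r0 x)\<^sup>2) * (r0 x)\<^sup>2) * Vc x"
  shows "(let W = (\<lambda>x. N ((r0 x)\<^sup>2) + N' ((r0 x)\<^sup>2) * (r0 x)\<^sup>2);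
              Vpot = (\<lambda>x. deriv W x + (W x)\<^sup>2)
          in (- (lam\<^sup>2) \<in> \<real> \<and> schrod_eigenpair Vpot (- (lam\<^sup>2)) U)
             \<and> (schrod_eigenvalue Vpot 0 \<and>
                (\<forall>E u. schrod_eigenpair Vpot E u \<longrightarrow> E \<in> \<real> \<and> 0 \<le> Re E)))"
proof -
  obtain D where D0: "D 0 = N"
    and Dd: "\<And>k x. x \<in> {0..} \<Longrightarrow> (D k has_real_derivative D (Suc k) x) (at x within {0..})"
    using N_smooth unfolding smooth_on_real_def by blast
  have atint: "at s within {0..} = at s" if "s > 0" for s :: real
    by (rule at_within_interior) (use that in auto)
  have Nd: "(N has_real_derivative N' s) (at s)" if "s > 0" for s
    using N'_deriv[of s] atint[OF that] that by simp
  have N'D1: "N' s = D 1 s" if "s > 0" for s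
  proof -
    have "(N has_real_derivative D 1 s) (at s)" using Dd[of s 0] D0 atint[OF that] that by simp
    thus ?thesis using DERIV_unique[OF Nd[OF that]] by blast
  qed
  have N'd: "(N' has_real_derivative D 2 s) (at s)" if "s > 0" for s
  proof -
    have "(D 1 has_real_derivative D 2 s) (at s)" using Dd[of s 1] atint[OF that] that
      by (simp add: numeral_2_eq_2)
    thus ?thesis
      by (rule has_field_derivative_transform_within_open[of _ _ _ "{0<..}"]) (use that N'D1 in auto)
  qed
  have Ncont: "continuous_on {0..} N"
    by (rule DERIV_continuous_on[of _ _ N']) (use N'_deriv in auto)
  have D1cont: "continuous_on {0..} (D 1)"
    by (rule DERIV_continuous_on[of _ _ "D 2"]) (use Dd[of _ 1] in \<open>auto simp: numeral_2_eq_2\<close>)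
  have Ndec: "N b < N a" if "0 \<le> a" "a < b" for a b
    by (rule DERIV_neg_imp_decreasing_open[OF that(2)])
       (use that in \<open>auto intro!: continuous_on_subset[OF Ncont] exI[of _ "N' _"] Nd N'_neg\<close>)
  have Npos: "N s > 0" if "0 \<le> s" "s < 1" for s using Ndec[OF that] N1 by simp
  have Nle1: "N s \<le> 1" if "0 \<le> s" for s
    using Ndec[of 0 s] N0 that by (cases "s = 0") auto
  have r0c: "continuous_on UNIV r0"
    by (intro continuous_at_imp_continuous_on ballI DERIV_isCont[OF r0_ode])
  have Ns_cont: "continuous_on UNIV (\<lambda>x. N ((r0 x)\<^sup>2))"
    by (rule continuous_on_compose2[OF Ncont, of UNIV "\<lambda>x. (r0 x)\<^sup>2"]) (auto intro!: continuous_intros r0c)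
  have r0pos: "r0 x > 0" for x
    by (rule pos_linear[of r0 "\<lambda>x. N ((r0 x)\<^sup>2)"]) (use r0_ode Ns_cont r0_init in \<open>auto simp: mult.commute\<close>)
  define Mf where "Mf s = (if s = 1 then - N' 1 else N s / (1 - s))" for s
  have MfN: "Mf s * (1 - s) = N s" for s unfolding Mf_def using N1 by auto
  have Mfc: "continuous_on {0..} Mf"
  proof (clarsimp simp: continuous_on_eq_continuous_within)
    fix s :: real assume s0: "0 \<le> s"
    show "continuous (at s within {0..}) Mf"
    proof (cases "s = 1")
      case False
      have "continuous (at s within {0..}) (\<lambda>s. N s / (1 - s))"
        using Ncont s0 False by (auto intro!: continuous_intros simp: continuous_on_eq_continuous_within)
      thus ?thesis
        by (rule continuous_transform_within[of _ _ _ "\<bar>s - 1\<bar>"]) (use False s0 in \<open>auto simp: Mf_def dist_real_def\<close>)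
    next
      case True
      have "((\<lambda>y. (N y - N 1) / (y - 1)) \<longlongrightarrow> N' 1) (at 1 within {0..})"
        using N'_deriv[of 1] by (simp add: has_field_derivative_iff)
      hence "((\<lambda>y. - ((N y - N 1) / (y - 1))) \<longlongrightarrow> - N' 1) (at 1 within {0..})"
        by (rule tendsto_minus)
      moreover have "\<forall>\<^sub>F y in at 1 within {0..}. - ((N y - N 1) / (y - 1)) = Mf y"
          unfolding eventually_at_filter using N1
          by (auto simp: Mf_def divide_simps algebra_simps)
      ultimately have "(Mf \<longlongrightarrow> - N' 1) (at 1 within {0..})"
        by (rule Lim_transform_eventually)
      moreover have "Mf 1 = - N' 1" by (simp add: Mf_def)
      ultimately have "(Mf \<longlongrightarrow> Mf 1) (at 1 within {0..})" by simp
      thus ?thesis using True by (simp add: continuous_within)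
    qed
  qed
  have sd: "((\<lambda>x. (r0 x)\<^sup>2) has_real_derivative 2 * r0 x * (r0 x * N ((r0 x)\<^sup>2))) (at x)" for x
    using DERIV_power[OF r0_ode, of 2 x] by (simp add: algebra_simps)
  have r0lt1: "r0 x < 1" for x
  proof -
    have "1 - (r0 x)\<^sup>2 > 0"
    proof (rule pos_linear[of "\<lambda>x. 1 - (r0 x)\<^sup>2" "\<lambda>x. - 2 * (r0 x)\<^sup>2 * Mf ((r0 x)\<^sup>2)"])
      fix x
      have A: "((\<lambda>x. 1 - (r0 x)\<^sup>2) has_real_derivative 0 - 2 * r0 x * (r0 x * N ((r0 x)\<^sup>2))) (at x)"
        by (intro derivative_intros sd)
      have B: "0 - 2 * r0 x * (r0 x * N ((r0 x)\<^sup>2)) = - 2 * (r0 x)\<^sup>2 * Mf ((r0 x)\<^sup>2) * (1 - (r0 x)\<^sup>2)"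
        unfolding MfN[of "(r0 x)\<^sup>2", symmetric] by (simp add: power2_eq_square algebra_simps)
      show "((\<lambda>x. 1 - (r0 x)\<^sup>2) has_real_derivative - 2 * (r0 x)\<^sup>2 * Mf ((r0 x)\<^sup>2) * (1 - (r0 x)\<^sup>2)) (at x)"
        using A unfolding B .
    next
      show "continuous_on UNIV (\<lambda>x. - 2 * (r0 x)\<^sup>2 * Mf ((r0 x)\<^sup>2))"
        by (intro continuous_intros r0c continuous_on_compose2[OF Mfc, of UNIV "\<lambda>x. (r0 x)\<^sup>2"]) auto
    qed (simp add: r0_init power2_eq_square)
    thus ?thesis using r0pos[of x] by (smt (verit) one_le_power)
  qed
  have s_pos: "(r0 x)\<^sup>2 > 0" for x using r0pos[of x] by simp
  have s_lt1: "(r0 x)\<^sup>2 < 1" for x using r0pos[of x] r0lt1[of x] by (simp add: power_less_one_iff abs_square_less_1)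
  define Wf where "Wf = (\<lambda>x. N ((r0 x)\<^sup>2) + N' ((r0 x)\<^sup>2) * (r0 x)\<^sup>2)"
  define sd where "sd x = 2 * r0 x * (r0 x * N ((r0 x)\<^sup>2))" for x
  define W'f where "W'f x = N' ((r0 x)\<^sup>2) * sd x + (D 2 ((r0 x)\<^sup>2) * sd x * (r0 x)\<^sup>2 + sd x * N' ((r0 x)\<^sup>2))" for x
  have Wd: "(Wf has_real_derivative W'f x) (at x)" for x
  proof -
    have sd': "((\<lambda>x. (r0 x)\<^sup>2) has_real_derivative sd x) (at x)" unfolding sd_def by (rule sd)
    have "((\<lambda>x. N ((r0 x)\<^sup>2) + N' ((r0 x)\<^sup>2) * (r0 x)\<^sup>2) has_real_derivative
       N' ((r0 x)\<^sup>2) * sd x + (D 2 ((r0 x)\<^sup>2) * sd x * (r0 x)\<^sup>2 + sd x * N' ((r0 x)\<^sup>2))) (at x)"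
    proof (rule DERIV_add)
      show "((\<lambda>x. N ((r0 x)\<^sup>2)) has_real_derivative N' ((r0 x)\<^sup>2) * sd x) (at x)"
        by (rule DERIV_chain2[OF Nd[OF s_pos] sd'])
      have "((\<lambda>x. N' ((r0 x)\<^sup>2)) has_real_derivative D 2 ((r0 x)\<^sup>2) * sd x) (at x)"
        by (rule DERIV_chain2[OF N'd[OF s_pos] sd'])
      from DERIV_mult[OF this sd']
      show "((\<lambda>x. N' ((r0 x)\<^sup>2) * (r0 x)\<^sup>2) has_real_derivative D 2 ((r0 x)\<^sup>2) * sd x * (r0 x)\<^sup>2 + sd x * N' ((r0 x)\<^sup>2)) (at x)" .
    qed
    thus ?thesis unfolding Wf_def W'f_def .
  qed
  have derivW: "deriv Wf x = W'f x" for x by (rule DERIV_imp_deriv[OF Wd])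
  obtain B where B: "\<And>t. t \<in> {0..1} \<Longrightarrow> \<bar>D 1 t\<bar> \<le> B"
  proof -
    have "compact (D 1 ` {0..1})"
      by (rule compact_continuous_image[OF continuous_on_subset[OF D1cont]]) auto
    then obtain B where "\<forall>y\<in>D 1 ` {0..1}. norm y \<le> B" using compact_imp_bounded bounded_iff by metis
    thus ?thesis using that by force
  qed
  have Wb: "\<bar>Wf x\<bar> \<le> 1 + B" for x
  proof -
    have N1': "0 < N ((r0 x)\<^sup>2)" "N ((r0 x)\<^sup>2) \<le> 1" using Npos[of "(r0 x)\<^sup>2"] Nle1[of "(r0 x)\<^sup>2"] s_pos[of x] s_lt1[of x] by auto
    have "\<bar>N' ((r0 x)\<^sup>2)\<bar> \<le> B" using B[of "(r0 x)\<^sup>2"] N'D1[OF s_pos[of x]] s_pos[of x] s_lt1[of x] by auto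
    hence "\<bar>N' ((r0 x)\<^sup>2) * (r0 x)\<^sup>2\<bar> \<le> B * 1"
      unfolding abs_mult using s_pos[of x] s_lt1[of x] by (intro mult_mono) auto
    thus ?thesis using N1' unfolding Wf_def by simp
  qed
  define qq where "qq x = (r0 x)\<^sup>2 * N ((r0 x)\<^sup>2)" for x
  have qq_pos: "qq x > 0" for x unfolding qq_def using s_pos[of x] Npos[of "(r0 x)\<^sup>2"] s_lt1[of x] by simp
  have qq_le1: "qq x \<le> 1" for x unfolding qq_def
    using s_pos[of x] s_lt1[of x] Nle1[of "(r0 x)\<^sup>2"] Npos[of "(r0 x)\<^sup>2"] by (intro mult_le_one) auto
  have qqd: "(qq has_real_derivative 2 * qq x * Wf x) (at x)" for x
  proof -
    have sd': "((\<lambda>x. (r0 x)\<^sup>2) has_real_derivative sd x) (at x)" unfolding sd_def by (rule sd)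
    have "(qq has_real_derivative sd x * N ((r0 x)\<^sup>2) + N' ((r0 x)\<^sup>2) * sd x * (r0 x)\<^sup>2) (at x)"
      unfolding qq_def[abs_def] by (rule DERIV_mult[OF sd' DERIV_chain2[OF Nd[OF s_pos] sd']])
    moreover have "sd x * N ((r0 x)\<^sup>2) + N' ((r0 x)\<^sup>2) * sd x * (r0 x)\<^sup>2 = 2 * qq x * Wf x"
      unfolding sd_def qq_def Wf_def by (simp add: power2_eq_square algebra_simps)
    ultimately show ?thesis by simp
  qed
  define u0 where "u0 x = sqrt (qq x)" for x
  have u0_pos: "u0 x > 0" for x unfolding u0_def using qq_pos by simp
  have u0sq: "(u0 x)\<^sup>2 = qq x" for x unfolding u0_def using qq_pos[of x] by simp
  have u0d: "(u0 has_real_derivative Wf x * u0 x) (at x)" for x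
  proof -
    have A: "(u0 has_real_derivative inverse (sqrt (qq x)) / 2 * (2 * qq x * Wf x)) (at x)"
      unfolding u0_def[abs_def] by (rule DERIV_chain2[OF DERIV_real_sqrt[OF qq_pos] qqd])
    have B: "inverse (sqrt (qq x)) / 2 * (2 * qq x * Wf x) = Wf x * u0 x"
      using u0sq[of x] u0_pos[of x] unfolding u0_def by (simp add: field_simps power2_eq_square)
    show ?thesis using A unfolding B .
  qed
  have u0d2: "((\<lambda>x. Wf x * u0 x) has_real_derivative (W'f x + (Wf x)\<^sup>2) * u0 x) (at x)" for x
  proof -
    have "((\<lambda>x. Wf x * u0 x) has_real_derivative W'f x * u0 x + (Wf x * u0 x) * Wf x) (at x)"
      by (rule DERIV_mult[OF Wd u0d])
    thus ?thesis by (simp add: algebra_simps power2_eq_square)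
  qed
  have qq_int: "integrable lborel qq"
  proof -
    have sdq: "((\<lambda>x. (r0 x)\<^sup>2 / 2) has_real_derivative qq x) (at x)" for x
    proof -
      have A: "((\<lambda>x. (r0 x)\<^sup>2 / 2) has_real_derivative 2 * r0 x * (r0 x * N ((r0 x)\<^sup>2)) / 2) (at x)"
        by (rule DERIV_cdivide[OF sd])
      have B: "2 * r0 x * (r0 x * N ((r0 x)\<^sup>2)) / 2 = qq x" unfolding qq_def by (simp add: power2_eq_square)
      show ?thesis using A unfolding B .
    qed
    have monoF: "mono (\<lambda>x. (r0 x)\<^sup>2 / 2)"
      unfolding mono_def
    proof (intro allI impI)
      fix x y :: real assume "x \<le> y"
      thus "(r0 x)\<^sup>2 / 2 \<le> (r0 y)\<^sup>2 / 2"
        using DERIV_nonneg_imp_nondecreasing[of x y "\<lambda>x. (r0 x)\<^sup>2 / 2"] sdq qq_pos less_imp_le by blast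
    qed
    have bF: "\<bar>(r0 x)\<^sup>2 / 2\<bar> \<le> 1" for x using s_pos[of x] s_lt1[of x] by simp
    obtain A where A: "((\<lambda>x. (r0 x)\<^sup>2 / 2) \<longlongrightarrow> A) at_bot" using mono_lim_bot[OF monoF bF] by blast
    obtain Bt where Bt: "((\<lambda>x. (r0 x)\<^sup>2 / 2) \<longlongrightarrow> Bt) at_top" using mono_lim_top[OF monoF bF] by blast
    have "set_integrable lborel (einterval (-\<infinity>) \<infinity>) qq"
    proof (rule interval_integral_FTC_nonneg(1)[where F = "\<lambda>x. (r0 x)\<^sup>2 / 2" and A = A and B = Bt])
      show "(((\<lambda>x. (r0 x)\<^sup>2 / 2) \<circ> real_of_ereal) \<longlongrightarrow> A) (at_right (-\<infinity>))"
        using A by (simp only: ereal_tendsto_simps1)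
      show "(((\<lambda>x. (r0 x)\<^sup>2 / 2) \<circ> real_of_ereal) \<longlongrightarrow> Bt) (at_left \<infinity>)"
        using Bt by (simp only: ereal_tendsto_simps1)
    qed (auto intro: sdq DERIV_isCont[OF qqd] less_imp_le[OF qq_pos])
    thus ?thesis by (simp add: set_integrable_def einterval_eq_UNIV)
  qed
  define Vp where "Vp = (\<lambda>x. deriv Wf x + (Wf x)\<^sup>2)"
  have Vp_eq: "Vp x = W'f x + (Wf x)\<^sup>2" for x unfolding Vp_def derivW ..
  define U0 where "U0 x = complex_of_real (u0 x)" for x
  have U0d: "(U0 has_vector_derivative complex_of_real (Wf x * u0 x)) (at x)" for x
    unfolding U0_def[abs_def] by (rule has_vector_derivative_of_real[OF u0d])
  have U0d2: "((\<lambda>x. complex_of_real (Wf x * u0 x)) has_vector_derivative complex_of_real ((W'f x + (Wf x)\<^sup>2) * u0 x)) (at x)" for x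
    by (rule has_vector_derivative_of_real[OF u0d2])
  have u0_le1: "u0 x \<le> 1" for x unfolding u0_def using qq_le1[of x] by simp
  have U0cont: "continuous_on UNIV U0"
    by (intro continuous_at_imp_continuous_on ballI has_vector_derivative_continuous[OF U0d])
  have L2U0: "L2_fun U0"
  proof -
    have "(\<lambda>x. (cmod (U0 x))\<^sup>2) = qq" using u0sq by (auto simp: U0_def fun_eq_iff)
    thus ?thesis unfolding L2_fun_def using qq_int borel_measurable_continuous_onI[OF U0cont] by simp
  qed
  have ground: "schrod_eigenvalue Vp 0"
    unfolding schrod_eigenvalue_def schrod_eigenpair_def
  proof (intro exI conjI)
    show "L2_fun U0" by (rule L2U0)
    show "U0 0 \<noteq> 0" using u0_pos[of 0] by (simp add: U0_def)
    show "\<forall>x. (U0 has_vector_derivative complex_of_real (Wf x * u0 x)) (at x) \<and>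
      ((\<lambda>x. complex_of_real (Wf x * u0 x)) has_vector_derivative complex_of_real ((W'f x + (Wf x)\<^sup>2) * u0 x)) (at x) \<and>
      - complex_of_real ((W'f x + (Wf x)\<^sup>2) * u0 x) + complex_of_real (Vp x) * U0 x = 0 * U0 x"
      using U0d U0d2 by (simp add: Vp_eq U0_def)
  qed
  have Wf_x: "Wf x = N ((r0 x)\<^sup>2) + N' ((r0 x)\<^sup>2) * (r0 x)\<^sup>2" for x unfolding Wf_def ..
  have spec: "E \<in> \<real> \<and> 0 \<le> Re E" if ep: "schrod_eigenpair Vp E u" for E u
  proof -
    from ep obtain u' u'' x0 where L2u: "L2_fun u" and nz: "u x0 \<noteq> 0"
      and d: "\<And>x. (u has_vector_derivative u' x) (at x)" "\<And>x. (u' has_vector_derivative u'' x) (at x)"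
      and e: "\<And>x. - u'' x + complex_of_real (Vp x) * u x = E * u x"
      unfolding schrod_eigenpair_def by blast
    have e': "u'' x = (complex_of_real (W'f x + (Wf x)\<^sup>2) - E) * u x" for x
      using e[of x] unfolding Vp_eq by (simp add: algebra_simps)
    have "Im E = 0 \<and> 0 \<le> Re E"
      by (rule spectral[OF Wd Wb d e' _ nz]) (use L2u in \<open>simp add: L2_fun_def\<close>)
    thus ?thesis by (simp add: complex_is_Real_iff)
  qed
  have U_nz: "\<exists>x. U x \<noteq> 0"
  proof (rule ccontr)
    assume "\<not> (\<exists>x. U x \<noteq> 0)"
    hence Uz: "U = (\<lambda>x. 0)" by auto
    have U'z: "U' x = 0" for x
      using vector_derivative_unique_at[OF U_ode[of x]] Uz by auto
    obtain xs where xs: "Vc xs \<noteq> 0" using B_nonzero Uz by auto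
    have "lam * Vc xs = 0" using U_eq[of xs] U'z[of xs] Uz by simp
    hence lam0: "lam = 0" using xs by simp
    have Vc'e: "Vc' x = - complex_of_real (Wf x) * Vc x" for x
      using V_eq[of x] lam0 unfolding Wf_x by (simp add: algebra_simps)
    define P where "P x = Vc x * U0 x" for x
    have Pd: "(P has_derivative (\<lambda>h. 0)) (at x within UNIV)" for x
    proof -
      have "(P has_vector_derivative Vc x * complex_of_real (Wf x * u0 x) + Vc' x * U0 x) (at x)"
        unfolding P_def[abs_def] by (rule has_vector_derivative_mult[OF V_ode U0d])
      moreover have "Vc x * complex_of_real (Wf x * u0 x) + Vc' x * U0 x = 0"
        unfolding Vc'e U0_def by (simp add: algebra_simps)
      ultimately have "(P has_vector_derivative 0) (at x)" by simp
      thus ?thesis by (simp add: has_vector_derivative_def)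
    qed
    obtain C where C: "\<And>x. P x = C" using has_derivative_zero_constant[of UNIV P] Pd by auto
    have Cnz: "C \<noteq> 0" using C[of xs] xs u0_pos[of xs] by (auto simp: P_def U0_def)
    have low: "(cmod C)\<^sup>2 \<le> (cmod (Vc x))\<^sup>2" for x
    proof -
      have "cmod C = cmod (Vc x) * u0 x" using C[of x] u0_pos[of x] by (auto simp: P_def U0_def norm_mult)
      also have "\<dots> \<le> cmod (Vc x)" using u0_le1[of x] by (simp add: mult_left_le)
      finally show ?thesis by (simp add: power_mono)
    qed
    show False
      by (rule nonint_tail[of "\<lambda>x. (cmod (Vc x))\<^sup>2" "(cmod C)\<^sup>2" 0])
         (use L2_V Cnz low in \<open>auto simp: L2_fun_def intro: integrable_on_lborel\<close>)
  qed
  define U'' where "U'' x = complex_of_real (W'f x) * U x + complex_of_real (Wf x) * U' x + lam * Vc' x" for x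
  have U'fun: "U' = (\<lambda>x. complex_of_real (Wf x) * U x + lam * Vc x)"
    using U_eq unfolding Wf_x by auto
  have U'd: "(U' has_vector_derivative U'' x) (at x)" for x
  proof -
    have "((\<lambda>x. complex_of_real (Wf x) * U x + lam * Vc x) has_vector_derivative
       (complex_of_real (Wf x) * U' x + complex_of_real (W'f x) * U x) + lam * Vc' x) (at x)"
      by (intro has_vector_derivative_add has_vector_derivative_mult has_vector_derivative_of_real
          has_vector_derivative_mult_right Wd U_ode V_ode)
    thus ?thesis unfolding U'fun U''_def by (simp add: algebra_simps)
  qed
  have Ueq: "U'' x = (complex_of_real (W'f x + (Wf x)\<^sup>2) - - (lam\<^sup>2)) * U x" for x
  proof -
    have a: "U' x = complex_of_real (Wf x) * U x + lam * Vc x" using U'fun by simp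
    have b: "Vc' x = lam * U x - complex_of_real (Wf x) * Vc x" using V_eq[of x] unfolding Wf_x .
    show ?thesis unfolding U''_def a b by (simp add: algebra_simps power2_eq_square)
  qed
  obtain xu where xu: "U xu \<noteq> 0" using U_nz by blast
  have UL: "integrable lborel (\<lambda>x. (cmod (U x))\<^sup>2)" using L2_U by (simp add: L2_fun_def)
  have Uep: "schrod_eigenpair Vp (- (lam\<^sup>2)) U"
    unfolding schrod_eigenpair_def
  proof (intro conjI exI allI)
    show "L2_fun U" by (rule L2_U)
    show "U xu \<noteq> 0" by (rule xu)
    fix x
    show "(U has_vector_derivative U' x) (at x)" by (rule U_ode)
    show "(U' has_vector_derivative U'' x) (at x)" by (rule U'd)
    show "- U'' x + complex_of_real (Vp x) * U x = - (lam\<^sup>2) * U x"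
      unfolding Ueq Vp_eq by (simp add: algebra_simps)
  qed
  have main: "(- (lam\<^sup>2) \<in> \<real> \<and> schrod_eigenpair Vp (- (lam\<^sup>2)) U)
             \<and> (schrod_eigenvalue Vp 0 \<and>
                (\<forall>E u. schrod_eigenpair Vp E u \<longrightarrow> E \<in> \<real> \<and> 0 \<le> Re E))"
    using Uep spec[OF Uep] ground spec by blast
  show ?thesis unfolding Let_def using main[unfolded Vp_def Wf_def] .
qed

end
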